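(* Fix $\alpha>0$, and let $h:[0,\infty)\to[0,\infty)$ be an increasing function with $h(t)\to\infty$ as $t\to\infty$ such that, for some $\rho\in(0,1)$, $\log h(t)<\rho\,(\alpha\wedge1)\log\log t$ for all sufficiently large $t$. Then there exists a non-negative random variable $X$ satisfying $\mathbb{E}[X^p]\le \frac{C}{\alpha-p}$ for all $p\in(0,\alpha)$ and some constant $C>0$ (equivalently, $\int_0^r y^{\alpha-1}\mathbb{P}(X\ge y)\,\mathrm{d}y\le C'\log r$ for all $r\ge\mathrm{e}$ and some $C'>0$), such that $$\limsup_{t\to\infty}\frac{t^\alpha\,\mathbb{P}(X\ge t)}{h(t)}\ge 1.$$ If moreover $\log h(t)=o(\log\log t)$ as $t\to\infty$, then $X$ can be chosen such that $t\mapsto\mathbb{P}(X\ge t)$ is regularly varying with index $-\alpha$.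
   Context: $\alpha\wedge 1=\min(\alpha,1)$. A function $g:(0,\infty)\to(0,\infty)$ is regularly varying with index $\beta\in\mathbb{R}$ if $\lim_{t\to\infty} g(at)/g(t)=a^\beta$ for every $a>0$. *)

theory Defs
  imports "HOL-Probability.Probability" "HOL-Library.Landau_Symbols"
begin

definition regularly_varying :: "(real \<Rightarrow> real) \<Rightarrow> real \<Rightarrow> bool" where
  "regularly_varying g \<beta> \<longleftrightarrow>
     (\<forall>t>0. g t > 0) \<and>
     (\<forall>a>0. ((\<lambda>t. g (a * t) / g t) \<longlongrightarrow> a powr \<beta>) at_top)"

end

theory Submission
  imports Defs "HOL-Real_Asymp.Real_Asymp"
begin

context
  fixes \<alpha> :: real and h :: "real \<Rightarrow> real"
begin

definition "c0 = min (\<alpha>/4) 1"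
definition "lam (k::nat) = c0 / (real k + 1)"
definition "cap (k::nat) = min (ln (2^k / (real k + 1)^4)) (c0 * 2^k / (2 * (real k + 1)))"
definition "raw (k::nat) = 1 + ln (max 1 (h (exp (2^(k+1)))))"
definition "H k = min (raw k) (cap k)"
definition "cen (k::nat) = 3 * 2^k / (2::real)"
definition "T k x = max 0 (H k - lam k * \<bar>x - cen k\<bar>)"
definition "kap (x::real) = nat \<lfloor>log 2 x\<rfloor>"
definition "phi x = T (kap x) x"

lemma c0_pos: "\<alpha> > 0 \<Longrightarrow> c0 > 0" by (simp add: c0_def)
lemma c0_le1: "c0 \<le> 1" by (simp add: c0_def)
lemma c0_le: "c0 \<le> \<alpha>/4" by (simp add: c0_def)

lemma H_le: "\<alpha> > 0 \<Longrightarrow> H k \<le> lam k * 2^k / 2"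
proof -
  have "H k \<le> c0 * 2^k / (2 * (real k + 1))" by (simp add: H_def cap_def)
  also have "\<dots> = lam k * 2^k / 2" by (simp add: lam_def)
  finally show ?thesis .
qed

lemma T_nonneg: "T k x \<ge> 0" by (simp add: T_def)

lemma T_zero_out:
  assumes "\<alpha> > 0" and "x < 2^k \<or> x \<ge> 2^(k+1)"
  shows "T k x = 0"
proof -
  have p: "(2::real)^k > 0" by simp
  have "\<bar>x - cen k\<bar> \<ge> 2^k/2" using assms(2) p by (auto simp: cen_def abs_if)
  moreover have "lam k \<ge> 0" using c0_pos[OF assms(1)] by (simp add: lam_def)
  ultimately have "lam k * \<bar>x - cen k\<bar> \<ge> lam k * 2^k / 2"
    by (metis mult_left_mono times_divide_eq_right)
  thus ?thesis using H_le[OF assms(1), of k] by (simp add: T_def)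
qed

lemma kap_bounds:
  assumes "x \<ge> 1" shows "2^kap x \<le> x" "x < 2^(kap x + 1)"
proof -
  have l: "log 2 x \<ge> 0" using assms by simp
  have "\<lfloor>log 2 x\<rfloor> = int (kap x)" using l by (simp add: kap_def)
  hence "2 powr (real (kap x)) \<le> x \<and> x < 2 powr (real (kap x) + 1)"
    using floor_log_eq_powr_iff[of x 2 "int (kap x)"] assms by simp
  thus "2^kap x \<le> x" "x < 2^(kap x + 1)"
    by (simp_all add: powr_realpow[symmetric] powr_add)
qed

lemma kap_small: "0 \<le> x \<Longrightarrow> x < 1 \<Longrightarrow> kap x = 0"
  unfolding kap_def by (cases "x > 0") (auto simp: log_def ln_less_zero)

lemma kap_mono: "0 \<le> x \<Longrightarrow> x \<le> y \<Longrightarrow> kap x \<le> kap y"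
  unfolding kap_def by (cases "x > 0") (auto intro!: nat_mono floor_mono simp: log_def divide_right_mono ln_le_cancel_iff)

lemma T_other:
  assumes "\<alpha> > 0" "x \<ge> 0" "kap x \<noteq> k" shows "T k x = 0"
proof (cases "x \<ge> 1")
  case True
  note b = kap_bounds[OF True]
  show ?thesis
  proof (cases "kap x < k")
    case True
    hence "(2::real)^(kap x + 1) \<le> 2^k" by (intro power_increasing) auto
    thus ?thesis using b by (intro T_zero_out[OF assms(1)]) auto
  next
    case False
    hence "k + 1 \<le> kap x" using assms(3) by auto
    hence "(2::real)^(k+1) \<le> 2^kap x" by (intro power_increasing) auto
    thus ?thesis using b by (intro T_zero_out[OF assms(1)]) auto
  qed
next
  case False
  hence "x < 2^k" using one_le_power[of "2::real" k] by linarith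
  thus ?thesis by (intro T_zero_out[OF assms(1)]) auto
qed

lemma T_lip: assumes "\<alpha> > 0" shows "\<bar>T k y - T k x\<bar> \<le> lam k * \<bar>y - x\<bar>"
proof -
  have l: "lam k \<ge> 0" using c0_pos[OF assms] by (simp add: lam_def)
  have "\<bar>(H k - lam k * \<bar>y - cen k\<bar>) - (H k - lam k * \<bar>x - cen k\<bar>)\<bar> \<le> lam k * \<bar>y - x\<bar>"
  proof -
    have "\<bar>\<bar>y - cen k\<bar> - \<bar>x - cen k\<bar>\<bar> \<le> \<bar>y - x\<bar>" by linarith
    hence "lam k * \<bar>\<bar>y - cen k\<bar> - \<bar>x - cen k\<bar>\<bar> \<le> lam k * \<bar>y - x\<bar>" using l by (rule mult_left_mono)
    thus ?thesis using l by (simp add: abs_mult right_diff_distrib[symmetric] abs_minus_commute)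
  qed
  thus ?thesis unfolding T_def by linarith
qed

lemma lam_anti: "\<alpha> > 0 \<Longrightarrow> k \<le> m \<Longrightarrow> lam m \<le> lam k"
  using c0_pos by (auto simp: lam_def intro!: divide_left_mono)

lemma phi_lip:
  assumes "\<alpha> > 0" "0 \<le> x" "x \<le> y"
  shows "\<bar>phi y - phi x\<bar> \<le> 2 * lam (kap x) * (y - x)"
proof (cases "kap x = kap y")
  case True
  thus ?thesis using T_lip[OF assms(1), of "kap x" y x] assms c0_pos[OF assms(1)]
    by (auto simp: phi_def lam_def)
next
  case False
  have km: "kap x \<le> kap y" by (rule kap_mono) (use assms in auto)
  have "phi y - phi x = (T (kap y) y - T (kap y) x) + (T (kap x) y - T (kap x) x)"
    using T_other[OF assms(1) assms(2) False] T_other[OF assms(1), of y "kap x"] False assms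
    by (simp add: phi_def)
  hence "\<bar>phi y - phi x\<bar> \<le> lam (kap y) * \<bar>y - x\<bar> + lam (kap x) * \<bar>y - x\<bar>"
    using T_lip[OF assms(1), of "kap y" y x] T_lip[OF assms(1), of "kap x" y x] by linarith
  also have "\<dots> \<le> 2 * lam (kap x) * (y - x)"
  proof -
    have "lam (kap y) * \<bar>y - x\<bar> \<le> lam (kap x) * \<bar>y - x\<bar>"
      using lam_anti[OF assms(1) km] by (intro mult_right_mono) auto
    thus ?thesis using assms by (simp add: mult.commute)
  qed
  finally show ?thesis .
qed

lemma phi_nonneg: "phi x \<ge> 0" by (simp add: phi_def T_nonneg)
lemma phi_0: "\<alpha> > 0 \<Longrightarrow> phi 0 = 0"
  using T_zero_out[of 0 0] by (simp add: phi_def kap_def log_def)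

lemma lam_le: "\<alpha> > 0 \<Longrightarrow> lam k \<le> c0"
  using c0_pos by (auto simp: lam_def divide_le_eq)

lemma phi_diff_le:
  assumes "\<alpha> > 0" "0 \<le> x" "x \<le> y"
  shows "phi y - phi x \<le> \<alpha>/2 * (y - x)"
proof -
  have "2 * lam (kap x) * (y - x) \<le> 2 * c0 * (y - x)"
    using lam_le[OF assms(1)] assms by (intro mult_right_mono) auto
  also have "\<dots> \<le> \<alpha>/2 * (y-x)" using c0_le assms by (intro mult_right_mono) auto
  finally show ?thesis using phi_lip[OF assms] by linarith
qed


definition "Sr x = exp (phi (ln x) - \<alpha> * ln x)"
definition "Sn (n::nat) = (if n = 0 then 1 else Sr (real n))"

lemma Sr_pos: "Sr x > 0" by (simp add: Sr_def)
lemma Sn_pos: "Sn n > 0" by (simp add: Sn_def Sr_pos)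

lemma Sr_1: "\<alpha> > 0 \<Longrightarrow> Sr 1 = 1" by (simp add: Sr_def phi_0)

lemma Sr_mono:
  assumes "\<alpha> > 0" "1 \<le> x" "x \<le> y" shows "Sr y \<le> Sr x"
proof -
  have l: "0 \<le> ln x" "ln x \<le> ln y" using assms by auto
  have "phi (ln y) - phi (ln x) \<le> \<alpha>/2 * (ln y - ln x)" by (rule phi_diff_le[OF assms(1) l])
  also have "\<dots> \<le> \<alpha> * (ln y - ln x)" using assms l by (intro mult_right_mono) auto
  finally have "phi (ln y) - phi (ln x) \<le> \<alpha> * (ln y - ln x)" .
  thus ?thesis unfolding Sr_def by (simp add: right_diff_distrib)
qed

lemma Sr_le: assumes "\<alpha> > 0" "1 \<le> x" shows "Sr x \<le> x powr (-\<alpha>/2)"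
proof -
  have "phi (ln x) - phi 0 \<le> \<alpha>/2 * (ln x - 0)" using assms by (intro phi_diff_le) auto
  hence "phi (ln x) - \<alpha> * ln x \<le> -\<alpha>/2 * ln x" using phi_0[OF assms(1)] by simp
  thus ?thesis using assms by (simp add: Sr_def powr_def)
qed

lemma Sn_Suc_le: assumes "\<alpha> > 0" shows "Sn (Suc n) \<le> Sn n"
proof (cases n)
  case 0 thus ?thesis using Sr_1[OF assms] by (simp add: Sn_def)
next
  case (Suc m) thus ?thesis using Sr_mono[OF assms, of "real n" "real (Suc n)"] by (simp add: Sn_def)
qed

lemma Sn_lim: assumes "\<alpha> > 0" shows "Sn \<longlonglongrightarrow> 0"
proof (rule Lim_null_comparison)
  show "\<forall>\<^sub>F n in sequentially. norm (Sn n) \<le> real n powr (-\<alpha>/2)"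
    using eventually_ge_at_top[of "1::nat"]
    by eventually_elim (use Sr_le[OF assms] Sr_pos in \<open>auto simp: Sn_def abs_of_pos\<close>)
  show "(\<lambda>n. real n powr (-\<alpha>/2)) \<longlonglongrightarrow> 0"
    using assms by (intro tendsto_neg_powr filterlim_real_sequentially) auto
qed

definition "Q = embed_pmf (\<lambda>n. Sn n - Sn (Suc n))"

lemma pmf_Q: assumes "\<alpha> > 0" shows "pmf Q n = Sn n - Sn (Suc n)"
proof -
  have s: "(\<lambda>n. Sn n - Sn (Suc n)) sums 1"
    using telescope_sums'[OF Sn_lim[OF assms]] by (simp add: Sn_def)
  have nn: "\<And>n. 0 \<le> Sn n - Sn (Suc n)" using Sn_Suc_le[OF assms] by simp
  have "(\<integral>\<^sup>+n. ennreal (Sn n - Sn (Suc n)) \<partial>count_space UNIV) = 1"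
    using suminf_ennreal2[OF nn sums_summable[OF s]] sums_unique[OF s]
    by (simp add: nn_integral_count_space_nat)
  thus ?thesis unfolding Q_def by (intro pmf_embed_pmf nn) 
qed

lemma prob_Q_tail: assumes "\<alpha> > 0" shows "measure_pmf.prob Q {n. N \<le> n} = Sn N"
proof -
  have "measure_pmf.prob Q {..<N} = (\<Sum>n<N. Sn n - Sn (Suc n))"
    by (simp add: measure_measure_pmf_finite pmf_Q[OF assms])
  also have "\<dots> = Sn 0 - Sn N" by (rule sum_lessThan_telescope')
  also have "\<dots> = 1 - Sn N" by (simp add: Sn_def)
  finally have a: "measure_pmf.prob Q {..<N} = 1 - Sn N" .
  have "{n. N \<le> n} = UNIV - {..<N}" by auto
  thus ?thesis using measure_pmf.prob_compl[of "{..<N}" Q] a by simp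
qed

lemma kap_eq: assumes "2^k \<le> x" "x < 2^(k+1)" shows "kap x = k"
proof -
  have x: "x > 0" using assms(1) by (smt (verit) zero_less_power)
  have "\<lfloor>log 2 x\<rfloor> = int k"
    using floor_log_eq_powr_iff[of x 2 "int k"] assms x by (simp add: powr_realpow powr_add)
  thus ?thesis by (simp add: kap_def)
qed

lemma card_interval_le:
  assumes "a \<le> b"
  shows "real (card {j::nat. a \<le> real j \<and> real j \<le> b}) \<le> b - a + 1"
proof -
  have sub: "{j::nat. a \<le> real j \<and> real j \<le> b} \<subseteq> {nat \<lceil>a\<rceil>..nat \<lfloor>b\<rfloor>}"
    by (auto simp: le_nat_iff ceiling_le_iff le_floor_iff)
  have "card {j::nat. a \<le> real j \<and> real j \<le> b} \<le> card {nat \<lceil>a\<rceil>..nat \<lfloor>b\<rfloor>}"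
    by (rule card_mono[OF _ sub]) simp
  hence "real (card {j::nat. a \<le> real j \<and> real j \<le> b}) \<le> real (nat \<lfloor>b\<rfloor> + 1 - nat \<lceil>a\<rceil>)" by simp
  also have "\<dots> \<le> b - a + 1"
    using assms by (cases "nat \<lceil>a\<rceil> \<le> nat \<lfloor>b\<rfloor> + 1") (auto simp: of_nat_diff, linarith+)
  finally show ?thesis .
qed

definition "dd (j::nat) = (exp (phi (real j)) - 1) / real j"
definition "RR k = max 0 (H k) / lam k"

lemma aux_div4: "(x::real) > 0 \<Longrightarrow> a * x^2 / x^4 = a / x^2"
  by (simp add: eval_nat_numeral field_simps)

lemma dd_nonneg: "dd j \<ge> 0" using phi_nonneg[of "real j"] by (simp add: dd_def)

lemma H_le_k: "H k \<le> real k"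
proof -
  have "H k \<le> ln (2^k / (real k + 1)^4)" by (simp add: H_def cap_def)
  also have "\<dots> \<le> ln (2^k)" by (intro ln_mono) (auto simp: divide_le_eq one_le_power)
  also have "\<dots> = real k * ln 2" by (simp add: ln_realpow)
  also have "\<dots> \<le> real k" using ln_2_less_1 by (simp add: mult_left_le)
  finally show ?thesis .
qed

lemma dd_block:
  assumes a: "\<alpha> > 0" and j: "2^k \<le> j" "j < 2^(k+1)"
  shows "dd j \<le> (if \<bar>real j - cen k\<bar> \<le> RR k then 1 / (real k + 1)^4 else 0)"
proof -
  have jr: "2^k \<le> real j" "real j < 2^(k+1)" using j by (metis of_nat_le_iff of_nat_numeral of_nat_power, metis of_nat_less_iff of_nat_numeral of_nat_power)
  have j0: "j > 0" using j(1) one_le_power[of "2::nat" k] by linarith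
  have pj: "phi (real j) = T k (real j)" using kap_eq[OF jr] by (simp add: phi_def)
  show ?thesis
  proof (cases "T k (real j) = 0")
    case True thus ?thesis using pj by (simp add: dd_def)
  next
    case False
    hence pos: "H k - lam k * \<bar>real j - cen k\<bar> > 0" and Tk: "T k (real j) = H k - lam k * \<bar>real j - cen k\<bar>"
      by (auto simp: T_def max_def split: if_splits)
    have lp: "lam k > 0" using c0_pos[OF a] by (simp add: lam_def)
    have Hp: "H k > 0" using pos lp by (smt (verit) mult_nonneg_nonneg abs_ge_zero)
    have in_w: "\<bar>real j - cen k\<bar> \<le> RR k"
      using pos lp Hp by (simp add: RR_def field_simps)
    have "exp (T k (real j)) \<le> exp (H k)" using Tk lp by simp
    also have "\<dots> \<le> exp (ln (2^k / (real k + 1)^4))"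
    proof -
      have "H k \<le> ln (2^k / (real k + 1)^4)" by (simp add: H_def cap_def)
      thus ?thesis by (metis exp_le_cancel_iff)
    qed
    also have "\<dots> = 2^k / (real k + 1)^4" by simp
    finally have e: "exp (phi (real j)) - 1 \<le> 2^k / (real k + 1)^4" using pj by simp
    have "dd j \<le> (2^k / (real k + 1)^4) / real j"
      unfolding dd_def using jr e by (intro divide_right_mono) auto
    also have "\<dots> \<le> (2^k / (real k + 1)^4) / 2^k"
      using jr by (intro divide_left_mono) (use j0 in auto)
    also have "\<dots> = 1 / (real k + 1)^4" by simp
    finally show ?thesis using in_w by simp
  qed
qed

lemma RR_le: "\<alpha> > 0 \<Longrightarrow> RR k \<le> real k * (real k + 1) / c0"
proof -
  assume a: "\<alpha> > 0"
  have "max 0 (H k) \<le> real k" using H_le_k by simp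
  hence "max 0 (H k) / lam k \<le> real k / lam k" using c0_pos[OF a] by (intro divide_right_mono) (auto simp: lam_def)
  thus ?thesis by (simp add: RR_def lam_def)
qed

lemma block_sum:
  assumes a: "\<alpha> > 0"
  shows "(\<Sum>j\<in>{2^k..<2^(k+1)}. dd j) \<le> (2 / c0 + 1) / (real k + 1)^2"
proof -
  define A where "A = {j\<in>{2^k..<2^(k+1)::nat}. \<bar>real j - cen k\<bar> \<le> RR k}"
  have "(\<Sum>j\<in>{2^k..<2^(k+1)}. dd j) \<le> (\<Sum>j\<in>{2^k..<2^(k+1)::nat}. if \<bar>real j - cen k\<bar> \<le> RR k then 1 / (real k + 1)^4 else 0)"
    by (intro sum_mono dd_block[OF a]) auto
  also have "\<dots> = (\<Sum>j\<in>A. 1 / (real k + 1)^4)"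
    unfolding A_def by (subst sum.inter_filter) auto
  also have "\<dots> = real (card A) / (real k + 1)^4" by simp
  also have "\<dots> \<le> (2 * RR k + 1) / (real k + 1)^4"
  proof (intro divide_right_mono)
    have R0: "RR k \<ge> 0" using c0_pos[OF a] by (simp add: RR_def lam_def)
    have "A \<subseteq> {j::nat. cen k - RR k \<le> real j \<and> real j \<le> cen k + RR k}" by (auto simp: A_def)
    moreover have "finite {j::nat. cen k - RR k \<le> real j \<and> real j \<le> cen k + RR k}"
      by (rule finite_subset[of _ "{..nat \<lfloor>cen k + RR k\<rfloor>}"]) (auto simp: le_nat_iff le_floor_iff)
    ultimately have "card A \<le> card {j::nat. cen k - RR k \<le> real j \<and> real j \<le> cen k + RR k}" by (rule card_mono[rotated])
    hence "real (card A) \<le> real (card {j::nat. cen k - RR k \<le> real j \<and> real j \<le> cen k + RR k})" by simp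
    also have "\<dots> \<le> 2 * RR k + 1" using card_interval_le[of "cen k - RR k" "cen k + RR k"] R0 by simp
    finally show "real (card A) \<le> 2 * RR k + 1" .
  qed simp
  also have "\<dots> \<le> (2 * (real k * (real k + 1) / c0) + 1) / (real k + 1)^4"
    using RR_le[OF a, of k] by (intro divide_right_mono) auto
  also have "\<dots> \<le> (2 / c0 + 1) / (real k + 1)^2"
  proof -
    have c: "c0 > 0" "c0 \<le> 1" using c0_pos[OF a] c0_le1 by auto
    have "2 * (real k * (real k + 1) / c0) + 1 \<le> (2 / c0 + 1) * (real k + 1)^2"
    proof -
      have "2 * (real k * (real k + 1) / c0) \<le> 2 / c0 * (real k + 1)^2"
        using c by (simp add: power2_eq_square field_simps mult_right_mono)
      moreover have "1 \<le> (real k + 1)^2" by (simp add: one_le_power)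
      moreover have "(2 / c0 + 1) * (real k + 1)^2 = 2 / c0 * (real k + 1)^2 + (real k + 1)^2"
        by (simp add: distrib_right)
      ultimately show ?thesis by linarith
    qed
    hence "(2 * (real k * (real k + 1) / c0) + 1) / (real k + 1)^4 \<le> (2 / c0 + 1) * (real k + 1)^2 / (real k + 1)^4"
      by (intro divide_right_mono) auto
    also have "\<dots> = (2 / c0 + 1) / (real k + 1)^2"
    proof -
      show ?thesis by (rule aux_div4) simp
    qed
    finally show ?thesis .
  qed
  finally show ?thesis .
qed

lemma dyadic_sum: "(\<Sum>j<2^K. dd j) = (\<Sum>k<K. \<Sum>j\<in>{2^k..<2^(k+1)}. dd j)"
proof (induction K)
  case 0 thus ?case by (simp add: dd_def)
next
  case (Suc K)
  have "(\<Sum>j\<in>{0..<2^K}. dd j) + (\<Sum>j\<in>{2^K..<2^Suc K}. dd j) = (\<Sum>j\<in>{0..<2^Suc K}. dd j)"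
    by (rule sum.atLeastLessThan_concat) auto
  hence "(\<Sum>j<2^Suc K. dd j) = (\<Sum>j\<in>{0..<2^K}. dd j) + (\<Sum>j\<in>{2^K..<2^Suc K}. dd j)"
    by (simp add: atLeast0LessThan)
  thus ?case using Suc by (simp add: atLeast0LessThan)
qed

lemma dd_summable: assumes a: "\<alpha> > 0" shows "summable dd"
proof (rule summableI_nonneg_bounded[OF dd_nonneg])
  fix n
  have s2: "summable (\<lambda>k. 1 / (real k + 1)^2)"
    using sums_summable[OF inverse_squares_sums] by (simp add: add.commute)
  have "(\<Sum>j<n. dd j) \<le> (\<Sum>j<2^n. dd j)"
    by (intro sum_mono2) (auto simp: dd_nonneg less_exp intro: less_imp_le_nat order.strict_trans2)
  also have "\<dots> \<le> (\<Sum>k<n. (2 / c0 + 1) * (1 / (real k + 1)^2))"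
    unfolding dyadic_sum using block_sum[OF a] by (intro sum_mono) simp
  also have "\<dots> = (2 / c0 + 1) * (\<Sum>k<n. 1 / (real k + 1)^2)" by (simp add: sum_distrib_left)
  also have "\<dots> \<le> (2 / c0 + 1) * (\<Sum>k. 1 / (real k + 1)^2)"
    using c0_pos[OF a] by (intro mult_left_mono sum_le_suminf[OF s2]) auto
  finally show "(\<Sum>j<n. dd j) \<le> (2 / c0 + 1) * (\<Sum>k. 1 / (real k + 1)^2)" .
qed

definition "MM = measure_pmf (map_pmf real Q)"

lemma tail_MM: assumes a: "\<alpha> > 0" and t: "t > 0"
  shows "measure MM {x\<in>space MM. t \<le> max 0 x} = Sn (nat \<lceil>t\<rceil>)"
proof -
  have e: "{n::nat. t \<le> real n} = {n. nat \<lceil>t\<rceil> \<le> n}"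
    using t by (auto simp: nat_le_iff ceiling_le_iff)
  have "measure MM {x\<in>space MM. t \<le> max 0 x} = measure_pmf.prob Q {n::nat. t \<le> real n}"
    using t by (simp add: MM_def)
  also have "\<dots> = measure_pmf.prob Q {n. nat \<lceil>t\<rceil> \<le> n}" unfolding e ..
  also have "\<dots> = Sn (nat \<lceil>t\<rceil>)" by (rule prob_Q_tail[OF a])
  finally show ?thesis .
qed

lemma Sn_ceil_le: assumes a: "\<alpha> > 0" and t: "t \<ge> 1" shows "Sn (nat \<lceil>t\<rceil>) \<le> Sr t"
proof -
  have "real (nat \<lceil>t\<rceil>) = of_int \<lceil>t\<rceil>" using t by simp
  hence r: "real (nat \<lceil>t\<rceil>) \<ge> t" using t by simp
  have r2: "nat \<lceil>t\<rceil> \<noteq> 0" using t by linarith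
  thus ?thesis using Sr_mono[OF a t r] r2 by (simp add: Sn_def)
qed

lemma pointwise_bound:
  assumes p: "p > 0"
  shows "ennreal (max 0 x powr p) \<le> 1 + (\<Sum>j. ennreal (exp ((real j + 1) * p)) * indicator {x. exp (real j) \<le> max 0 x} x)"
proof (cases "max 0 x < 1")
  case True
  have "max 0 x powr p \<le> 1"
    using True p by (cases "max 0 x = 0") (auto intro!: powr_le1)
  hence "ennreal (max 0 x powr p) \<le> 1" by (simp add: ennreal_le_1)
  thus ?thesis by (rule order_trans) simp
next
  case False
  define y where "y = max 0 x"
  have y1: "y \<ge> 1" using False by (simp add: y_def)
  define J where "J = nat \<lfloor>ln y\<rfloor>"
  have lnpos: "ln y \<ge> 0" using y1 by simp
  have J1: "real J \<le> ln y" "ln y < real J + 1" using lnpos by (auto simp: J_def)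
  have e1: "exp (real J) \<le> y" using J1(1) y1 by (metis exp_le_cancel_iff exp_ln less_le_trans zero_less_one)
  have "y powr p = exp (p * ln y)" using y1 by (simp add: powr_def)
  also have "\<dots> \<le> exp ((real J + 1) * p)" using J1(2) p by (simp add: mult.commute)
  finally have "ennreal (y powr p) \<le> ennreal (exp ((real J + 1) * p)) * indicator {x. exp (real J) \<le> max 0 x} x"
    using e1 by (simp add: y_def ennreal_leI)
  also have "\<dots> \<le> (\<Sum>j. ennreal (exp ((real j + 1) * p)) * indicator {x. exp (real j) \<le> max 0 x} x)"
  proof -
    define f where "f = (\<lambda>j. ennreal (exp ((real j + 1) * p)) * indicator {x. exp (real j) \<le> max 0 x} x)"
    have "sum f {J} \<le> suminf f" by (intro sum_le_suminf) auto
    hence "f J \<le> suminf f" by simp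
    thus ?thesis unfolding f_def .
  qed
  also have "\<dots> \<le> 1 + (\<Sum>j. ennreal (exp ((real j + 1) * p)) * indicator {x. exp (real j) \<le> max 0 x} x)"
    by simp
  finally show ?thesis by (simp add: y_def)
qed

lemma term_bound:
  assumes a: "\<alpha> > 0" and p: "0 < p" "p < \<alpha>"
  shows "exp ((real j + 1) * p) * Sr (exp (real j)) \<le> exp p * (exp (-(\<alpha> - p)) ^ j + dd j / (\<alpha> - p))"
proof -
  define e where "e = \<alpha> - p"
  have e0: "e > 0" using p by (simp add: e_def)
  have "exp ((real j + 1) * p) * Sr (exp (real j)) = exp p * (exp (- e * real j) * exp (phi (real j)))"
    by (simp add: Sr_def e_def mult_exp_exp algebra_simps)
  also have "\<dots> = exp p * (exp (- e * real j) + exp (- e * real j) * (exp (phi (real j)) - 1))"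
    by (simp add: algebra_simps)
  also have "\<dots> \<le> exp p * (exp (-e) ^ j + dd j / e)"
  proof -
    have "exp (- e * real j) * (exp (phi (real j)) - 1) \<le> dd j / e"
    proof (cases "j = 0")
      case True thus ?thesis using phi_0[OF a] by (simp add: dd_def)
    next
      case False
      hence jp: "real j > 0" by simp
      have "e * real j < exp (e * real j)" using exp_gt_zero add_strict_increasing2 exp_ge_add_one_self
        by (smt (verit))
      hence "exp (- e * real j) \<le> 1 / (e * real j)"
        using e0 jp by (simp add: exp_minus field_simps)
      moreover have "exp (phi (real j)) - 1 \<ge> 0" using phi_nonneg by simp
      ultimately have "exp (- e * real j) * (exp (phi (real j)) - 1) \<le> 1 / (e * real j) * (exp (phi (real j)) - 1)"
        by (intro mult_right_mono) auto
      thus ?thesis by (simp add: dd_def mult.commute)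
    qed
    moreover have "exp (- e * real j) = exp (-e) ^ j" by (simp add: exp_of_nat_mult[symmetric] mult.commute)
    ultimately show ?thesis by (intro mult_left_mono) auto
  qed
  finally show ?thesis by (simp add: e_def)
qed

definition "CC = \<alpha> + exp \<alpha> * (1 + \<alpha> + suminf dd)"

lemma CC_pos: "\<alpha> > 0 \<Longrightarrow> CC > 0"
  using suminf_nonneg[OF dd_summable dd_nonneg] by (simp add: CC_def add_pos_nonneg)

lemma moment_bound:
  assumes a: "\<alpha> > 0" and p: "0 < p" "p < \<alpha>"
  shows "(\<integral>\<^sup>+x. ennreal (max 0 x powr p) \<partial>MM) \<le> ennreal (CC / (\<alpha> - p))"
proof -
  define e where "e = \<alpha> - p"
  have e0: "e > 0" using p by (simp add: e_def)
  define q where "q = exp (-e)"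
  have q: "0 < q" "q < 1" using e0 by (auto simp: q_def)
  define D where "D = suminf dd"
  have D0: "D \<ge> 0" using suminf_nonneg[OF dd_summable[OF a] dd_nonneg] by (simp add: D_def)
  define g where "g = (\<lambda>j. exp p * (q ^ j + dd j / e))"
  have gs: "g sums (exp p * (1 / (1 - q) + D / e))"
    unfolding g_def D_def
    by (intro sums_mult sums_add geometric_sums sums_divide summable_sums dd_summable[OF a]) (use q in auto)
  have g0: "\<And>j. g j \<ge> 0" using q dd_nonneg e0 by (auto simp: g_def)
  have meas: "\<And>j. emeasure MM {x. exp (real j) \<le> max 0 x} \<le> ennreal (Sr (exp (real j)))"
  proof -
    fix j :: nat
    have "emeasure MM {x. exp (real j) \<le> max 0 x} = ennreal (measure MM {x\<in>space MM. exp (real j) \<le> max 0 x})"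
      by (simp add: MM_def measure_pmf.emeasure_eq_measure)
    also have "\<dots> = ennreal (Sn (nat \<lceil>exp (real j)\<rceil>))" by (simp add: tail_MM[OF a])
    also have "\<dots> \<le> ennreal (Sr (exp (real j)))" by (intro ennreal_leI Sn_ceil_le[OF a]) simp
    finally show "emeasure MM {x. exp (real j) \<le> max 0 x} \<le> ennreal (Sr (exp (real j)))" .
  qed
  have "(\<integral>\<^sup>+x. ennreal (max 0 x powr p) \<partial>MM) \<le>
        (\<integral>\<^sup>+x. 1 + (\<Sum>j. ennreal (exp ((real j + 1) * p)) * indicator {x. exp (real j) \<le> max 0 x} x) \<partial>MM)"
    by (intro nn_integral_mono pointwise_bound p)
  also have "\<dots> = (\<integral>\<^sup>+x. 1 \<partial>MM) + (\<integral>\<^sup>+x. (\<Sum>j. ennreal (exp ((real j + 1) * p)) * indicator {x. exp (real j) \<le> max 0 x} x) \<partial>MM)"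
    by (rule nn_integral_add) (auto simp: MM_def)
  also have "\<dots> = 1 + (\<Sum>j. \<integral>\<^sup>+x. ennreal (exp ((real j + 1) * p)) * indicator {x. exp (real j) \<le> max 0 x} x \<partial>MM)"
    by (subst nn_integral_suminf) (auto simp: MM_def measure_pmf.emeasure_space_1)
  also have "\<dots> = 1 + (\<Sum>j. ennreal (exp ((real j + 1) * p)) * emeasure MM {x. exp (real j) \<le> max 0 x})"
    by (subst nn_integral_cmult_indicator) (auto simp: MM_def)
  also have "\<dots> \<le> 1 + (\<Sum>j. ennreal (g j))"
  proof (intro add_left_mono suminf_le summableI)
    fix j
    have "ennreal (exp ((real j + 1) * p)) * emeasure MM {x. exp (real j) \<le> max 0 x}
          \<le> ennreal (exp ((real j + 1) * p)) * ennreal (Sr (exp (real j)))"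
      by (intro mult_left_mono meas) auto
    also have "\<dots> = ennreal (exp ((real j + 1) * p) * Sr (exp (real j)))"
      by (rule ennreal_mult[symmetric]) (auto intro: less_imp_le Sr_pos)
    also have "\<dots> \<le> ennreal (g j)"
      unfolding g_def q_def e_def by (intro ennreal_leI term_bound[OF a p])
    finally show "ennreal (exp ((real j + 1) * p)) * emeasure MM {x. exp (real j) \<le> max 0 x} \<le> ennreal (g j)" .
  qed
  also have "\<dots> = ennreal (1 + exp p * (1 / (1 - q) + D / e))"
    using suminf_ennreal2[OF g0 sums_summable[OF gs]] sums_unique[OF gs] q D0 e0
      suminf_nonneg[OF sums_summable[OF gs] g0]
    by (simp add: ennreal_plus)
  also have "\<dots> \<le> ennreal (CC / e)"
  proof (intro ennreal_leI)
    have "1 - q \<ge> e / (1 + e)"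
    proof -
      have "1 + e \<le> exp e" by (rule exp_ge_add_one_self)
      hence "q \<le> 1 / (1 + e)" using e0 by (simp add: q_def exp_minus field_simps)
      thus ?thesis using e0 by (simp add: field_simps)
    qed
    hence "1 / (1 - q) \<le> 1 / (e / (1 + e))" using e0 q
      by (intro divide_left_mono) (auto intro!: mult_pos_pos)
    hence "1 / (1 - q) \<le> (1 + e) / e" by simp
    also have "\<dots> \<le> (1 + \<alpha>) / e" using e0 p by (intro divide_right_mono) (auto simp: e_def)
    finally have b1: "1 / (1 - q) \<le> (1 + \<alpha>) / e" .
    have ep: "exp p \<le> exp \<alpha>" using p by simp
    have b2: "1 \<le> \<alpha> / e" using e0 p by (simp add: e_def field_simps)
    have "exp p * (1 / (1 - q) + D / e) \<le> exp \<alpha> * ((1 + \<alpha>) / e + D / e)"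
      using b1 ep D0 e0 q by (intro mult_mono add_mono) auto
    also have "\<dots> = exp \<alpha> * (1 + \<alpha> + D) / e" using e0 by (simp add: field_simps)
    finally show "1 + exp p * (1 / (1 - q) + D / e) \<le> CC / e"
      using b2 by (simp add: CC_def D_def add_divide_distrib)
  qed
  finally show ?thesis by (simp add: e_def)
qed

lemma H_eq_raw:
  assumes a: "\<alpha> > 0" and r: "0 < r" "r < 1"
    and ev: "eventually (\<lambda>t. ln (h t) < r * ln (ln t)) at_top"
  shows "eventually (\<lambda>k. H k = raw k) sequentially"
proof -
  have lim1: "filterlim (\<lambda>k::nat. exp (2^(k+1)::real)) at_top sequentially" by real_asymp
  have e1: "eventually (\<lambda>k. ln (h (exp (2^(k+1)))) < r * ln (ln (exp (2^(k+1))))) sequentially"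
    using filterlim_iff[THEN iffD1, OF lim1, rule_format, OF ev] by simp
  have lim2: "(\<lambda>k::nat. (1 + ln 2 + 4 * ln (real k + 1)) / real k) \<longlonglongrightarrow> 0" by real_asymp
  have e2: "eventually (\<lambda>k. (1 + ln 2 + 4 * ln (real k + 1)) / real k < (1 - r) * ln 2) sequentially"
    using order_tendstoD(2)[OF lim2] r by simp
  have lim3: "(\<lambda>k::nat. (real k + 2) * (2 * (real k + 1)) / 2^k) \<longlonglongrightarrow> 0" by real_asymp
  have e3: "eventually (\<lambda>k. (real k + 2) * (2 * (real k + 1)) / 2^k < c0) sequentially"
    using order_tendstoD(2)[OF lim3] c0_pos[OF a] by simp
  show ?thesis
    using e1 e2 e3 eventually_gt_at_top[of "0::nat"]
  proof eventually_elim
    case (elim k)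
    have lnl: "ln (ln (exp (2^(k+1)::real))) = (real k + 1) * ln 2"
      using ln_realpow[of 2 "Suc k"] by simp
    have rawb: "raw k \<le> 1 + r * ((real k + 1) * ln 2)"
    proof (cases "h (exp (2^(k+1))) \<le> 1")
      case True thus ?thesis using r by (simp add: raw_def)
    next
      case False
      hence "raw k = 1 + ln (h (exp (2^(k+1))))" by (simp add: raw_def)
      thus ?thesis using elim(1) lnl by simp
    qed
    have kp: "real k > 0" using elim(4) by simp
    have "1 + ln 2 + 4 * ln (real k + 1) < (1 - r) * ln 2 * real k"
      using elim(2) kp by (simp add: divide_less_eq)
    moreover have "r * ln 2 \<le> 1 * ln 2" by (rule mult_right_mono) (use r in auto)
    moreover have "(1 - r) * ln 2 * real k = real k * ln 2 - r * (real k * ln 2)" by (simp add: algebra_simps)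
    moreover have "r * ((real k + 1) * ln 2) = r * ln 2 + r * (real k * ln 2)" by (simp add: algebra_simps)
    ultimately have "1 + r * ((real k + 1) * ln 2) \<le> real k * ln 2 - 4 * ln (real k + 1)"
      by linarith
    also have "\<dots> = ln (2^k / (real k + 1)^4)"
      by (simp add: ln_div ln_realpow)
    finally have b1: "raw k \<le> ln (2^k / (real k + 1)^4)" using rawb by linarith
    have "1 + r * ((real k + 1) * ln 2) \<le> real k + 2"
    proof -
      have X: "(real k + 1) * ln 2 \<le> real k + 1" using ln_2_less_1 by (intro mult_left_le) auto
      have "r * ((real k + 1) * ln 2) \<le> (real k + 1) * ln 2" using r by (intro mult_left_le_one_le) auto
      thus ?thesis using X by linarith
    qed
    also have "\<dots> \<le> c0 * 2^k / (2 * (real k + 1))"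
      using elim(3) by (simp add: field_simps)
    finally have b2: "raw k \<le> c0 * 2^k / (2 * (real k + 1))" using rawb by linarith
    show ?case using b1 b2 by (simp add: H_def cap_def)
  qed
qed

lemma peak:
  assumes a: "\<alpha> > 0" and hm: "mono_on {0..} h" and k: "k \<ge> 2" and Hk: "H k = raw k"
  defines "n \<equiv> nat \<lceil>exp (cen k)\<rceil>"
  shows "h (real n) \<le> real n powr \<alpha> * Sn n" and "real n \<ge> real k" and "n > 0"
proof -
  have c0': "cen k \<ge> 0" by (simp add: cen_def)
  have rn: "real n = of_int \<lceil>exp (cen k)\<rceil>" by (simp add: n_def)
  have n1: "real n \<ge> exp (cen k)" "real n < exp (cen k) + 1" using rn by linarith+
  have np: "real n > 0" using n1 by (smt (verit) exp_gt_zero)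
  thus "n > 0" by simp
  have "exp (cen k) + 1 \<le> exp (cen k + 1)"
  proof -
    have "exp (cen k) \<ge> 1" using c0' by simp
    moreover have "exp (1::real) \<ge> 2" using exp_ge_add_one_self[of 1] by simp
    moreover have "exp (cen k) * 2 \<le> exp (cen k) * exp 1" by (rule mult_left_mono) (use calculation in auto)
    ultimately have "exp (cen k) * 1 + 1 \<le> exp (cen k) * exp 1" by linarith
    thus ?thesis by (simp add: exp_add)
  qed
  hence n2: "real n \<le> exp (cen k + 1)" using n1 by simp
  have ln1: "ln (real n) \<ge> cen k" using n1 np by (metis exp_le_cancel_iff exp_ln)
  have ln2: "ln (real n) \<le> cen k + 1" using n2 np by (metis exp_le_cancel_iff exp_ln)
  have pk: "(2::real)^k \<ge> 4" using power_increasing[OF k, of "2::real"] by simp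
  have bk: "2^k \<le> ln (real n)" "ln (real n) < 2^(k+1)" "cen k + 1 \<le> 2^(k+1)"
    using ln1 ln2 pk by (auto simp: cen_def)
  have "phi (ln (real n)) = T k (ln (real n))" using kap_eq[OF bk(1,2)] by (simp add: phi_def)
  also have "\<dots> \<ge> H k - lam k * 1"
  proof -
    have "\<bar>ln (real n) - cen k\<bar> \<le> 1" using ln1 ln2 by simp
    hence "lam k * \<bar>ln (real n) - cen k\<bar> \<le> lam k * 1"
      using c0_pos[OF a] by (intro mult_left_mono) (auto simp: lam_def)
    thus ?thesis by (simp add: T_def)
  qed
  finally have "phi (ln (real n)) \<ge> raw k - 1" using lam_le[OF a, of k] c0_le1 Hk by linarith
  hence "ln (max 1 (h (exp (2^(k+1))))) \<le> phi (ln (real n))" by (simp add: raw_def)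
  hence "exp (ln (max 1 (h (exp (2^(k+1)))))) \<le> exp (phi (ln (real n)))" by (simp only: exp_le_cancel_iff)
  moreover have "exp (ln (max 1 (h (exp (2^(k+1)))))) = max 1 (h (exp (2^(k+1))))" by (rule exp_ln) simp
  ultimately have "exp (phi (ln (real n))) \<ge> max 1 (h (exp (2^(k+1))))" by simp
  moreover have "h (real n) \<le> h (exp (2^(k+1)))"
  proof (rule mono_onD[OF hm])
    have "exp (cen k + 1) \<le> exp (2^(k+1))" using bk(3) by simp
    thus "real n \<le> exp (2^(k+1))" using n2 by linarith
  qed (use np in auto)
  moreover have "real n powr \<alpha> * Sn n = exp (phi (ln (real n)))"
    using np by (simp add: Sn_def Sr_def powr_def mult_exp_exp)
  ultimately show "h (real n) \<le> real n powr \<alpha> * Sn n" by linarith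
  have "real k \<le> cen k"
  proof -
    have "k < 2^k" by (rule less_exp)
    hence "real k \<le> 2^k" by (metis less_imp_le of_nat_le_iff of_nat_numeral of_nat_power)
    thus ?thesis unfolding cen_def by linarith
  qed
  also have "\<dots> \<le> exp (cen k)" by (smt (verit) exp_ge_add_one_self)
  finally show "real n \<ge> real k" using n1 by linarith
qed

lemma lam_nonneg: "\<alpha> > 0 \<Longrightarrow> lam k \<ge> 0" using c0_pos by (simp add: lam_def)

lemma omega_lim: assumes a: "\<alpha> > 0" shows "((\<lambda>z. lam (kap z)) \<longlongrightarrow> 0) at_top"
proof (rule Lim_null_comparison)
  show "\<forall>\<^sub>F z in at_top. norm (lam (kap z)) \<le> c0 / log 2 z"
    using eventually_ge_at_top[of "2::real"]
  proof eventually_elim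
    case (elim z)
    have z1: "z \<ge> 1" using elim by simp
    have lg: "log 2 z \<ge> 1" using elim by simp
    have "real (kap z) = real_of_int \<lfloor>log 2 z\<rfloor>" using lg by (simp add: kap_def)
    hence "log 2 z < real (kap z) + 1" by linarith
    hence "c0 / (real (kap z) + 1) \<le> c0 / log 2 z"
      using c0_pos[OF a] lg by (intro divide_left_mono) auto
    thus ?case using c0_pos[OF a] by (simp add: lam_def)
  qed
  have "filterlim (\<lambda>z. log 2 z) at_top at_top" by real_asymp
  thus "((\<lambda>z. c0 / log 2 z) \<longlongrightarrow> 0) at_top"
    by (intro tendsto_divide_0[OF tendsto_const] filterlim_at_top_imp_at_infinity)
qed

lemma phi_close:
  assumes a: "\<alpha> > 0" and fu: "filterlim u at_top F" and fv: "filterlim v at_top F"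
    and B: "eventually (\<lambda>x. \<bar>v x - u x\<bar> \<le> B) F"
  shows "((\<lambda>x. phi (v x) - phi (u x)) \<longlongrightarrow> 0) F"
proof (rule Lim_null_comparison)
  show "eventually (\<lambda>x. norm (phi (v x) - phi (u x)) \<le> 2 * (lam (kap (u x)) + lam (kap (v x))) * B) F"
    using B eventually_ge_at_top[of 0, THEN filterlim_iff[THEN iffD1, OF fu, rule_format]]
      eventually_ge_at_top[of 0, THEN filterlim_iff[THEN iffD1, OF fv, rule_format]]
  proof eventually_elim
    case (elim x)
    have l: "lam (kap (u x)) \<ge> 0" "lam (kap (v x)) \<ge> 0" using lam_nonneg[OF a] by auto
    show ?case
    proof (cases "u x \<le> v x")
      case True
      have "\<bar>phi (v x) - phi (u x)\<bar> \<le> 2 * lam (kap (u x)) * (v x - u x)"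
        by (rule phi_lip[OF a]) (use elim True in auto)
      also have "\<dots> \<le> 2 * lam (kap (u x)) * B" using elim l by (intro mult_left_mono) auto
      also have "\<dots> \<le> 2 * (lam (kap (u x)) + lam (kap (v x))) * B"
        using l elim by (intro mult_right_mono) auto
      finally show ?thesis by simp
    next
      case False
      have "\<bar>phi (u x) - phi (v x)\<bar> \<le> 2 * lam (kap (v x)) * (u x - v x)"
        by (rule phi_lip[OF a]) (use elim False in auto)
      also have "\<dots> \<le> 2 * lam (kap (v x)) * B" using elim l by (intro mult_left_mono) auto
      also have "\<dots> \<le> 2 * (lam (kap (u x)) + lam (kap (v x))) * B"
        using l elim by (intro mult_right_mono) auto
      finally show ?thesis by (simp add: abs_minus_commute)
    qed
  qed
  have "((\<lambda>x. lam (kap (u x))) \<longlongrightarrow> 0) F" by (rule filterlim_compose[OF omega_lim[OF a] fu])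
  moreover have "((\<lambda>x. lam (kap (v x))) \<longlongrightarrow> 0) F" by (rule filterlim_compose[OF omega_lim[OF a] fv])
  ultimately show "((\<lambda>x. 2 * (lam (kap (u x)) + lam (kap (v x))) * B) \<longlongrightarrow> 0) F"
    by (auto intro!: tendsto_eq_intros)
qed

lemma ceil_ln_bounds:
  assumes "s \<ge> (1::real)" shows "0 \<le> ln (real_of_int \<lceil>s\<rceil>) - ln s" "ln (real_of_int \<lceil>s\<rceil>) - ln s \<le> 1 / s"
proof -
  have s0: "s > 0" using assms by simp
  have c: "s \<le> real_of_int \<lceil>s\<rceil>" "real_of_int \<lceil>s\<rceil> \<le> s + 1" by linarith+
  show "0 \<le> ln (real_of_int \<lceil>s\<rceil>) - ln s" using c s0 by simp
  have "ln (real_of_int \<lceil>s\<rceil>) \<le> ln (s + 1)" using c s0 by simp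
  also have "ln (s + 1) = ln s + ln (1 + 1/s)"
  proof -
    have "1 + 1/s = (s + 1) / s" using s0 by (simp add: field_simps)
    thus ?thesis using s0 by (simp add: ln_div)
  qed
  also have "ln (1 + 1/s) \<le> 1/s" using s0 by (intro ln_add_one_self_le_self) auto
  finally show "ln (real_of_int \<lceil>s\<rceil>) - ln s \<le> 1 / s" by simp
qed

lemma ceil_ln_lim: "((\<lambda>s. ln (real_of_int \<lceil>s\<rceil>) - ln s) \<longlongrightarrow> 0) at_top"
proof (rule Lim_null_comparison)
  show "\<forall>\<^sub>F s in at_top. norm (ln (real_of_int \<lceil>s\<rceil>) - ln s) \<le> 1 / s"
    using eventually_ge_at_top[of "1::real"] by eventually_elim (use ceil_ln_bounds in auto)
  show "((\<lambda>s::real. 1 / s) \<longlongrightarrow> 0) at_top" by real_asymp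
qed

lemma ceil_ln_at_top: "filterlim (\<lambda>s::real. ln (real_of_int \<lceil>s\<rceil>)) at_top at_top"
proof -
  have ev: "eventually (\<lambda>x. ln x \<le> ln (real_of_int \<lceil>x\<rceil>)) at_top"
    using eventually_ge_at_top[of "1::real"] by eventually_elim (use ceil_ln_bounds in auto)
  show ?thesis using filterlim_at_top_mono[OF ln_at_top ev] by simp
qed

lemma Sn_ceil: assumes "s \<ge> 1"
  shows "Sn (nat \<lceil>s\<rceil>) = exp (phi (ln (real_of_int \<lceil>s\<rceil>)) - \<alpha> * ln (real_of_int \<lceil>s\<rceil>))"
proof -
  have "\<lceil>s\<rceil> \<ge> 1" using assms by (metis ceiling_mono ceiling_one)
  hence "nat \<lceil>s\<rceil> \<noteq> 0" by simp
  moreover have "real (nat \<lceil>s\<rceil>) = real_of_int \<lceil>s\<rceil>" using assms by simp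
  ultimately show ?thesis by (simp add: Sn_def Sr_def)
qed

lemma RV: assumes a: "\<alpha> > 0"
  shows "regularly_varying (\<lambda>t. measure MM {x\<in>space MM. max 0 x \<ge> t}) (-\<alpha>)"
  unfolding regularly_varying_def
proof (intro conjI allI impI)
  fix t :: real assume "t > 0"
  thus "measure MM {x\<in>space MM. max 0 x \<ge> t} > 0" by (simp add: tail_MM[OF a] Sn_pos)
next
  fix c :: real assume c: "c > 0"
  define L where "L = (\<lambda>s::real. ln (real_of_int \<lceil>s\<rceil>))"
  define \<Phi> where "\<Phi> = (\<lambda>s. phi (L s) - \<alpha> * L s)"
  have ev1: "eventually (\<lambda>t. t \<ge> max 1 (1/c)) at_top" by (rule eventually_ge_at_top)
  have mul: "filterlim (\<lambda>t. c * t) at_top at_top"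
    by (rule filterlim_tendsto_pos_mult_at_top[OF tendsto_const c filterlim_ident])
  have eq: "eventually (\<lambda>t. measure MM {x\<in>space MM. max 0 x \<ge> c * t} / measure MM {x\<in>space MM. max 0 x \<ge> t}
        = exp (\<Phi> (c * t) - \<Phi> t)) at_top"
    using ev1
  proof eventually_elim
    case (elim t)
    have t1: "t \<ge> 1" using elim by simp
    have ct: "c * t \<ge> 1" using elim c by (simp add: field_simps)
    show ?case
      using tail_MM[OF a, of t] tail_MM[OF a, of "c*t"] t1 ct Sn_ceil[OF t1] Sn_ceil[OF ct]
      by (simp add: \<Phi>_def L_def exp_diff)
  qed
  have lu: "filterlim L at_top at_top" unfolding L_def by (rule ceil_ln_at_top)
  have lv: "filterlim (\<lambda>t. L (c * t)) at_top at_top" by (rule filterlim_compose[OF lu mul])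
  have L1: "((\<lambda>t. L t - ln t) \<longlongrightarrow> 0) at_top" unfolding L_def by (rule ceil_ln_lim)
  have L2: "((\<lambda>t. L (c * t) - ln (c * t)) \<longlongrightarrow> 0) at_top"
    by (rule filterlim_compose[OF L1 mul])
  have diff_eq: "eventually (\<lambda>t. L (c * t) - L t = (L (c * t) - ln (c * t)) - (L t - ln t) + ln c) at_top"
    using eventually_gt_at_top[of "0::real"] by eventually_elim (use c in \<open>simp add: ln_mult\<close>)
  have D0: "((\<lambda>t. (L (c * t) - ln (c * t)) - (L t - ln t) + ln c) \<longlongrightarrow> 0 - 0 + ln c) at_top"
    by (intro tendsto_intros L1 L2)
  have D: "((\<lambda>t. L (c * t) - L t) \<longlongrightarrow> 0 - 0 + ln c) at_top"
    by (rule Lim_transform_eventually[OF D0]) (use diff_eq in \<open>auto elim: eventually_mono\<close>)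
  have B: "eventually (\<lambda>t. \<bar>L (c * t) - L t\<bar> \<le> \<bar>ln c\<bar> + 2) at_top"
    using ev1 diff_eq
  proof eventually_elim
    case (elim t)
    have t1: "t \<ge> 1" using elim by simp
    have ct: "c * t \<ge> 1" using elim c by (simp add: field_simps)
    have "1 / t \<le> 1" "1 / (c * t) \<le> 1" using t1 ct by auto
    thus ?case using elim(2) ceil_ln_bounds[OF t1] ceil_ln_bounds[OF ct] unfolding L_def by linarith
  qed
  have P: "((\<lambda>t. phi (L (c * t)) - phi (L t)) \<longlongrightarrow> 0) at_top"
    by (rule phi_close[OF a lu lv B])
  have "((\<lambda>t. exp (\<Phi> (c * t) - \<Phi> t)) \<longlongrightarrow> exp (0 - \<alpha> * (0 - 0 + ln c))) at_top"
  proof -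
    have "((\<lambda>t. (phi (L (c * t)) - phi (L t)) - \<alpha> * (L (c * t) - L t)) \<longlongrightarrow> 0 - \<alpha> * (0 - 0 + ln c)) at_top"
      by (intro tendsto_intros P D)
    moreover have "(\<lambda>t. (phi (L (c * t)) - phi (L t)) - \<alpha> * (L (c * t) - L t)) = (\<lambda>t. \<Phi> (c * t) - \<Phi> t)"
      by (rule ext) (simp add: \<Phi>_def algebra_simps)
    ultimately have "((\<lambda>t. \<Phi> (c * t) - \<Phi> t) \<longlongrightarrow> 0 - \<alpha> * (0 - 0 + ln c)) at_top" by simp
    thus ?thesis by (rule tendsto_exp)
  qed
  moreover have "exp (0 - \<alpha> * (0 - 0 + ln c)) = c powr (-\<alpha>)" using c by (simp add: powr_def)
  ultimately show "((\<lambda>t. measure MM {x\<in>space MM. max 0 x \<ge> c * t} / measure MM {x\<in>space MM. max 0 x \<ge> t}) \<longlongrightarrow> c powr (-\<alpha>)) at_top"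
    using eq by (simp add: tendsto_cong)
qed

end



lemma limsup_part:
  fixes \<alpha> :: real and h :: "real \<Rightarrow> real"
  assumes a: "\<alpha> > 0" and hm: "mono_on {0..} h" and hinf: "filterlim h at_top at_top"
    and r: "0 < r" "r < 1" and ev: "eventually (\<lambda>t. ln (h t) < r * ln (ln t)) at_top"
  shows "Limsup at_top (\<lambda>t. ereal (t powr \<alpha> * measure (MM \<alpha> h) {x\<in>space (MM \<alpha> h). max 0 x \<ge> t} / h t)) \<ge> 1"
proof (rule Limsup_greatest)
  fix P :: "real \<Rightarrow> bool" assume "eventually P at_top"
  then obtain T where T: "\<And>t. t \<ge> T \<Longrightarrow> P t" unfolding eventually_at_top_linorder by blast
  obtain K1 where K1: "\<And>k. k \<ge> K1 \<Longrightarrow> H \<alpha> h k = raw h k"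
    using H_eq_raw[OF a r ev] by (auto simp: eventually_sequentially)
  have "eventually (\<lambda>t. 1 \<le> h t) at_top" using hinf by (simp add: filterlim_at_top)
  then obtain T2 where T2: "\<And>t. t \<ge> T2 \<Longrightarrow> 1 \<le> h t" unfolding eventually_at_top_linorder by blast
  define k where "k = max (max K1 2) (nat \<lceil>max T T2\<rceil>)"
  define n where "n = nat \<lceil>exp (cen k)\<rceil>"
  have Hk: "H \<alpha> h k = raw h k" using K1 by (simp add: k_def)
  have k2: "k \<ge> 2" by (simp add: k_def)
  note pk = peak[OF a hm k2 Hk, folded n_def]
  have "real k \<ge> real (nat \<lceil>max T T2\<rceil>)" unfolding k_def by (intro of_nat_mono) simp
  hence "real k \<ge> max T T2" using real_nat_ceiling_ge[of "max T T2"] by linarith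
  hence nT: "real n \<ge> T" "real n \<ge> T2" using pk(2) by auto
  have hn: "h (real n) \<ge> 1" using T2[OF nT(2)] .
  have "measure (MM \<alpha> h) {x\<in>space (MM \<alpha> h). max 0 x \<ge> real n} = Sn \<alpha> h n"
    using tail_MM[OF a, of "real n"] pk(3) by simp
  hence "1 \<le> real n powr \<alpha> * measure (MM \<alpha> h) {x\<in>space (MM \<alpha> h). max 0 x \<ge> real n} / h (real n)"
    using pk(1) hn by (simp add: le_divide_eq)
  hence "ereal 1 \<le> ereal (real n powr \<alpha> * measure (MM \<alpha> h) {x\<in>space (MM \<alpha> h). max 0 x \<ge> real n} / h (real n))"
    by simp
  also have "\<dots> \<le> (SUP x\<in>Collect P. ereal (x powr \<alpha> * measure (MM \<alpha> h) {x'\<in>space (MM \<alpha> h). max 0 x' \<ge> x} / h x))"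
    using T[OF nT(1)] by (intro SUP_upper) auto
  finally show "1 \<le> (SUP x\<in>Collect P. ereal (x powr \<alpha> * measure (MM \<alpha> h) {x'\<in>space (MM \<alpha> h). max 0 x' \<ge> x} / h x))"
    by (simp only: one_ereal_def)
qed

theorem proposition2p4:
  fixes \<alpha> :: real and h :: "real \<Rightarrow> real"
  assumes alpha_pos: "\<alpha> > 0"
    and h_mono: "mono_on {0..} h"
    and h_nonneg: "\<forall>t\<ge>0. h t \<ge> 0"
    and h_infty: "filterlim h at_top at_top"
    and h_growth: "\<exists>\<rho>\<in>{0<..<1}. eventually (\<lambda>t. ln (h t) < \<rho> * min \<alpha> 1 * ln (ln t)) at_top"
  shows "(\<exists>(M :: real measure) X. prob_space M \<and> X \<in> borel_measurable M \<and>
            (\<forall>x\<in>space M. X x \<ge> 0) \<and>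
            (\<exists>C>0. \<forall>p\<in>{0<..<\<alpha>}. (\<integral>\<^sup>+ x. ennreal (X x powr p) \<partial>M) \<le> ennreal (C / (\<alpha> - p))) \<and>
            Limsup at_top (\<lambda>t. ereal (t powr \<alpha> * measure M {x\<in>space M. X x \<ge> t} / h t)) \<ge> 1)
       \<and> ((\<lambda>t. ln (h t)) \<in> o[at_top](\<lambda>t. ln (ln t)) \<longrightarrow>
          (\<exists>(M :: real measure) X. prob_space M \<and> X \<in> borel_measurable M \<and>
            (\<forall>x\<in>space M. X x \<ge> 0) \<and>
            (\<exists>C>0. \<forall>p\<in>{0<..<\<alpha>}. (\<integral>\<^sup>+ x. ennreal (X x powr p) \<partial>M) \<le> ennreal (C / (\<alpha> - p))) \<and>
            Limsup at_top (\<lambda>t. ereal (t powr \<alpha> * measure M {x\<in>space M. X x \<ge> t} / h t)) \<ge> 1 \<and>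
            regularly_varying (\<lambda>t. measure M {x\<in>space M. X x \<ge> t}) (- \<alpha>)))"
proof -
  obtain \<rho> where \<rho>: "0 < \<rho>" "\<rho> < 1" and ev0: "eventually (\<lambda>t. ln (h t) < \<rho> * min \<alpha> 1 * ln (ln t)) at_top"
    using h_growth by auto
  define r where "r = \<rho> * min \<alpha> 1"
  have r: "0 < r" "r < 1"
  proof -
    show "0 < r" using \<rho> alpha_pos by (simp add: r_def)
    have "\<rho> * min \<alpha> 1 \<le> \<rho> * 1" using \<rho> by (intro mult_left_mono) auto
    thus "r < 1" using \<rho> unfolding r_def by linarith
  qed
  have ev: "eventually (\<lambda>t. ln (h t) < r * ln (ln t)) at_top" using ev0 by (simp add: r_def)
  define M where "M = MM \<alpha> h"
  define X where "X = (\<lambda>x::real. max 0 x)"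
  have main: "prob_space M \<and> X \<in> borel_measurable M \<and>
            (\<forall>x\<in>space M. X x \<ge> 0) \<and>
            (\<exists>C>0. \<forall>p\<in>{0<..<\<alpha>}. (\<integral>\<^sup>+ x. ennreal (X x powr p) \<partial>M) \<le> ennreal (C / (\<alpha> - p))) \<and>
            Limsup at_top (\<lambda>t. ereal (t powr \<alpha> * measure M {x\<in>space M. X x \<ge> t} / h t)) \<ge> 1 \<and>
            regularly_varying (\<lambda>t. measure M {x\<in>space M. X x \<ge> t}) (- \<alpha>)"
  proof (intro conjI)
    show "prob_space M" by (simp add: M_def MM_def measure_pmf.prob_space_axioms)
    show "X \<in> borel_measurable M" by (simp add: M_def MM_def)
    show "\<forall>x\<in>space M. X x \<ge> 0" by (simp add: X_def)
    show "\<exists>C>0. \<forall>p\<in>{0<..<\<alpha>}. (\<integral>\<^sup>+ x. ennreal (X x powr p) \<partial>M) \<le> ennreal (C / (\<alpha> - p))"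
      using CC_pos[OF alpha_pos, of h] moment_bound[OF alpha_pos, of _ h] unfolding M_def X_def by auto
    show "Limsup at_top (\<lambda>t. ereal (t powr \<alpha> * measure M {x\<in>space M. X x \<ge> t} / h t)) \<ge> 1"
      unfolding M_def X_def by (rule limsup_part[OF alpha_pos h_mono h_infty r ev])
    show "regularly_varying (\<lambda>t. measure M {x\<in>space M. X x \<ge> t}) (- \<alpha>)"
      unfolding M_def X_def by (rule RV[OF alpha_pos])
  qed
  from main have P: "prob_space M" "X \<in> borel_measurable M" "\<forall>x\<in>space M. X x \<ge> 0"
    "\<exists>C>0. \<forall>p\<in>{0<..<\<alpha>}. (\<integral>\<^sup>+ x. ennreal (X x powr p) \<partial>M) \<le> ennreal (C / (\<alpha> - p))"
    "Limsup at_top (\<lambda>t. ereal (t powr \<alpha> * measure M {x\<in>space M. X x \<ge> t} / h t)) \<ge> 1"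
    "regularly_varying (\<lambda>t. measure M {x\<in>space M. X x \<ge> t}) (- \<alpha>)"
    using main[THEN conjunct1] main[THEN conjunct2, THEN conjunct1]
      main[THEN conjunct2, THEN conjunct2, THEN conjunct1]
      main[THEN conjunct2, THEN conjunct2, THEN conjunct2, THEN conjunct1]
      main[THEN conjunct2, THEN conjunct2, THEN conjunct2, THEN conjunct2, THEN conjunct1]
      main[THEN conjunct2, THEN conjunct2, THEN conjunct2, THEN conjunct2, THEN conjunct2]
    by - assumption+
  show ?thesis
    by (intro conjI impI exI[of _ M] exI[of _ X]; rule P)
qed

end
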